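(* Let $n,d,T$ be positive integers and let $\Phi_T:\mathbb{R}^{d\times n}\to\mathbb{R}^m$ be a 1-WL geometric model (as defined in the context) in which all the functions $\phi_t,\psi_t$ ($t=0,\dots,T-1$) and $\mathrm{ReadOut}$ are upper Lipschitz. Then $\Phi_T$ is Lipschitz with respect to $d_{\mathcal{D}}$: there exists $L>0$ such that $\|\Phi_T({X})-\Phi_T({Y})\|_2\leq L\, d_{\mathcal{D}}({X},{Y})$ for all ${X},{Y}\in\mathbb{R}^{d\times n}$.
   Context: A point set is ${X}\in\mathbb{R}^{d\times n}$ with columns $x_1,\dots,x_n\in\mathbb{R}^d$. A 1-WL geometric model with $T$ iterations is defined as follows: set $c_i^0=0$ for all $i\in[n]$, and for $t=0,\dots,T-1$, $$c_i^{t+1}=\phi_t\Big(c_i^t,\ \psi_t\big(\{\!\{(c_i^t,c_j^t,\|x_i-x_j\|_2)\mid j\in[n]\}\!\}\big)\Big),$$ and finally $\Phi_T({X})=\mathrm{ReadOut}(\{\!\{c_1^T,\dots,c_n^T\}\!\})$. Here $\phi_t$ are functions between Euclidean spaces, and $\psi_t$ and $\mathrm{ReadOut}$ are multiset functions, i.e. functions of a matrix whose columns are the multiset elements that are invariant to permuting these columns; Lipschitzness of a multiset function means Lipschitzness of this matrix function in the standard Euclidean sense. The Hard-Gromov-Wasserstein distance is $$d_{\mathcal{D}}({X},{Y})=\min_{\pi\in S_n}\sum_{i,j=1}^n\big|\,\|x_i-x_j\|_2-\|y_{\pi(i)}-y_{\pi(j)}\|_2\,\big|.$$ *)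

theory Defs
  imports "HOL-Analysis.Analysis" "HOL-Library.Multiset"
begin

text \<open>Vectors of R^k are represented as real lists of length k; a matrix whose
columns are the multiset elements is a list of columns (all of the same length).\<close>

definition lnorm :: "real list \<Rightarrow> real" where
  "lnorm x = sqrt (\<Sum>a\<leftarrow>x. a\<^sup>2)"

definition ldist :: "real list \<Rightarrow> real list \<Rightarrow> real" where
  "ldist x y = lnorm (map2 (-) x y)"

definition mdist :: "real list list \<Rightarrow> real list list \<Rightarrow> real" where
  "mdist A B = sqrt (\<Sum>(a, b)\<leftarrow>zip A B. (ldist a b)\<^sup>2)"

definition euclid_fun :: "nat \<Rightarrow> nat \<Rightarrow> (real list \<Rightarrow> real list) \<Rightarrow> bool" where
  "euclid_fun k l f \<longleftrightarrow> (\<forall>x. length x = k \<longrightarrow> length (f x) = l)"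

definition lipschitz_vec :: "nat \<Rightarrow> (real list \<Rightarrow> real list) \<Rightarrow> bool" where
  "lipschitz_vec k f \<longleftrightarrow> (\<exists>L. \<forall>x y. length x = k \<longrightarrow> length y = k \<longrightarrow>
      ldist (f x) (f y) \<le> L * ldist x y)"

definition is_matrix :: "nat \<Rightarrow> nat \<Rightarrow> real list list \<Rightarrow> bool" where
  "is_matrix k n A \<longleftrightarrow> length A = n \<and> (\<forall>a\<in>set A. length a = k)"

definition multiset_fun :: "nat \<Rightarrow> nat \<Rightarrow> nat \<Rightarrow> (real list list \<Rightarrow> real list) \<Rightarrow> bool" where
  "multiset_fun k n l F \<longleftrightarrow>
     (\<forall>A. is_matrix k n A \<longrightarrow> length (F A) = l) \<and>
     (\<forall>A B. is_matrix k n A \<longrightarrow> is_matrix k n B \<longrightarrow> mset A = mset B \<longrightarrow> F A = F B)"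

definition lipschitz_mat :: "nat \<Rightarrow> nat \<Rightarrow> (real list list \<Rightarrow> real list) \<Rightarrow> bool" where
  "lipschitz_mat k n F \<longleftrightarrow> (\<exists>L. \<forall>A B. is_matrix k n A \<longrightarrow> is_matrix k n B \<longrightarrow>
      ldist (F A) (F B) \<le> L * mdist A B)"

text \<open>Colors c_i^t of the 1-WL geometric model. k t is the color dimension at step t;
psi t is the multiset function, phi t acts on the concatenation (c_i^t, psi_t(...)).\<close>
fun wl_color :: "(nat \<Rightarrow> nat) \<Rightarrow> (nat \<Rightarrow> real list list \<Rightarrow> real list) \<Rightarrow>
    (nat \<Rightarrow> real list \<Rightarrow> real list) \<Rightarrow> nat \<Rightarrow> (nat \<Rightarrow> real^'d) \<Rightarrow> nat \<Rightarrow> nat \<Rightarrow> real list" where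
  "wl_color k psi phi n X 0 i = replicate (k 0) 0"
| "wl_color k psi phi n X (Suc t) i =
     phi t (wl_color k psi phi n X t i @
            psi t (map (\<lambda>j. wl_color k psi phi n X t i @ wl_color k psi phi n X t j @ [dist (X i) (X j)]) [0..<n]))"

definition wl_model :: "(nat \<Rightarrow> nat) \<Rightarrow> (nat \<Rightarrow> real list list \<Rightarrow> real list) \<Rightarrow>
    (nat \<Rightarrow> real list \<Rightarrow> real list) \<Rightarrow> (real list list \<Rightarrow> real list) \<Rightarrow> nat \<Rightarrow> nat \<Rightarrow>
    (nat \<Rightarrow> real^'d) \<Rightarrow> real list" where
  "wl_model k psi phi readout T n X = readout (map (\<lambda>i. wl_color k psi phi n X T i) [0..<n])"

text \<open>Hard-Gromov-Wasserstein distance; the point set X in R^(d x n) has columns X 0, ..., X (n-1).\<close>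
definition hard_GW :: "nat \<Rightarrow> (nat \<Rightarrow> real^'d) \<Rightarrow> (nat \<Rightarrow> real^'d) \<Rightarrow> real" where
  "hard_GW n X Y = Min {(\<Sum>i<n. \<Sum>j<n. \<bar>dist (X i) (X j) - dist (Y (\<pi> i)) (Y (\<pi> j))\<bar>) | \<pi>. \<pi> permutes {..<n}}"

end

theory Submission
  imports Defs
begin


lemma ldist_L2: "length x = length y \<Longrightarrow> ldist x y = L2_set (\<lambda>i. x!i - y!i) {0..<length x}"
  unfolding ldist_def lnorm_def L2_set_def
  by (simp add: sum_list_sum_nth)

lemma lsq0: "ldist x y = sqrt (sum_list (map (\<lambda>(a,b). (a-b)^2) (zip x y)))"
  unfolding ldist_def lnorm_def by (simp add: case_prod_unfold comp_def)

lemma ldist_nonneg: "ldist x y \<ge> 0"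
  unfolding lsq0 by (auto intro!: sum_list_nonneg)

lemma ldist_self: "ldist x x = 0"
  unfolding ldist_def lnorm_def by (induction x) auto

lemma ldist_triangle:
  assumes "length x = length y" "length y = length z"
  shows "ldist x z \<le> ldist x y + ldist y z"
proof -
  have "ldist x z = L2_set (\<lambda>i. (x!i - y!i) + (y!i - z!i)) {0..<length x}"
    using assms by (simp add: ldist_L2)
  also have "\<dots> \<le> L2_set (\<lambda>i. x!i - y!i) {0..<length x} + L2_set (\<lambda>i. y!i - z!i) {0..<length x}"
    by (rule L2_set_triangle_ineq)
  also have "\<dots> = ldist x y + ldist y z" using assms by (simp add: ldist_L2)
  finally show ?thesis .
qed

lemma lsq: "ldist x y = sqrt (sum_list (map (\<lambda>(a,b). (a-b)^2) (zip x y)))"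
  by (rule lsq0)

lemma ldist_append:
  assumes "length a = length c"
  shows "ldist (a@b) (c@d) \<le> ldist a c + ldist b d"
proof -
  have "ldist (a@b) (c@d) = sqrt (sum_list (map (\<lambda>(a,b). (a-b)^2) (zip a c)) + sum_list (map (\<lambda>(a,b). (a-b)^2) (zip b d)))"
    using assms by (simp add: lsq)
  also have "\<dots> \<le> ldist a c + ldist b d" unfolding lsq
    by (rule sqrt_add_le_add_sqrt) (auto intro!: sum_list_nonneg)
  finally show ?thesis .
qed

lemma ldist_single: "ldist [a] [b] = \<bar>a - b\<bar>"
  by (simp add: lsq)

lemma mdist_le: "mdist (map f [0..<n]) (map g [0..<n]) \<le> (\<Sum>j<n. ldist (f j) (g j))"
proof -
  have "mdist (map f [0..<n]) (map g [0..<n]) = L2_set (\<lambda>j. ldist (f j) (g j)) {..<n}"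
    unfolding mdist_def L2_set_def
    by (simp add: zip_map_map zip_same_conv_map comp_def sum_list_distinct_conv_sum_set atLeast0LessThan)
  also have "\<dots> \<le> (\<Sum>j<n. ldist (f j) (g j))"
    by (rule L2_set_le_sum) (simp add: ldist_nonneg)
  finally show ?thesis .
qed


lemma color_len:
  assumes psi_ms: "\<And>t. t < T \<Longrightarrow> multiset_fun (2 * k t + 1) n (mm t) (psi t)"
    and phi_fun: "\<And>t. t < T \<Longrightarrow> euclid_fun (k t + mm t) (k (Suc t)) (phi t)"
  shows "t \<le> T \<Longrightarrow> length (wl_color k psi phi n X t i) = k t"
proof (induction t arbitrary: i)
  case 0 then show ?case by simp
next
  case (Suc t)
  have t: "t < T" using Suc by simp
  have IH: "\<And>i. length (wl_color k psi phi n X t i) = k t" using Suc by simp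
  let ?M = "map (\<lambda>j. wl_color k psi phi n X t i @ wl_color k psi phi n X t j @ [dist (X i) (X j)]) [0..<n]"
  have "is_matrix (2 * k t + 1) n ?M" unfolding is_matrix_def using IH by auto
  then have "length (psi t ?M) = mm t" using psi_ms[OF t] unfolding multiset_fun_def by blast
  then show ?case using phi_fun[OF t] IH unfolding euclid_fun_def by simp
qed

lemma mset_perm:
  assumes "\<pi> permutes {..<n}"
  shows "mset (map (h \<circ> \<pi>) [0..<n]) = mset (map h [0..<n])"
proof -
  have "inj_on \<pi> {..<n}" using assms permutes_inj_on by blast
  then have d: "distinct (map \<pi> [0..<n])" by (simp add: distinct_map atLeast0LessThan)
  have s: "set (map \<pi> [0..<n]) = {..<n}" using assms permutes_image by (simp add: atLeast0LessThan)
  have "mset (map \<pi> [0..<n]) = mset [0..<n]"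
    using d s by (metis atLeast0LessThan distinct_upt mset_set_set set_upt)
  then have "image_mset h (mset (map \<pi> [0..<n])) = image_mset h (mset [0..<n])" by simp
  then show ?thesis by (simp add: mset_map image_mset.compositionality)
qed

theorem theorem3:
  fixes n T m :: nat
    and k mm :: "nat \<Rightarrow> nat"
    and psi :: "nat \<Rightarrow> real list list \<Rightarrow> real list"
    and phi :: "nat \<Rightarrow> real list \<Rightarrow> real list"
    and readout :: "real list list \<Rightarrow> real list"
  assumes "n > 0" and "T > 0"
    and psi_ms: "\<And>t. t < T \<Longrightarrow> multiset_fun (2 * k t + 1) n (mm t) (psi t)"
    and psi_lip: "\<And>t. t < T \<Longrightarrow> lipschitz_mat (2 * k t + 1) n (psi t)"
    and phi_fun: "\<And>t. t < T \<Longrightarrow> euclid_fun (k t + mm t) (k (Suc t)) (phi t)"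
    and phi_lip: "\<And>t. t < T \<Longrightarrow> lipschitz_vec (k t + mm t) (phi t)"
    and ro_ms: "multiset_fun (k T) n m readout"
    and ro_lip: "lipschitz_mat (k T) n readout"
  shows "\<exists>L>0. \<forall>X Y :: nat \<Rightarrow> real^'d.
           ldist (wl_model k psi phi readout T n X) (wl_model k psi phi readout T n Y)
             \<le> L * hard_GW n X Y"
proof -
  let ?c = "wl_color k psi phi n"
  have len: "\<And>(X :: nat \<Rightarrow> real^'d) t i. t \<le> T \<Longrightarrow> length (?c X t i) = k t"
    using color_len[of T k n mm psi phi, OF psi_ms phi_fun] by blast
  have "\<forall>t. \<exists>L. t < T \<longrightarrow> L \<ge> 0 \<and> (\<forall>x y :: real list. length x = k t + mm t \<longrightarrow> length y = k t + mm t \<longrightarrow>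
      ldist (phi t x) (phi t y) \<le> L * ldist x y)"
  proof
    fix t
    show "\<exists>L. t < T \<longrightarrow> L \<ge> 0 \<and> (\<forall>x y :: real list. length x = k t + mm t \<longrightarrow> length y = k t + mm t \<longrightarrow>
      ldist (phi t x) (phi t y) \<le> L * ldist x y)"
    proof (cases "t < T")
      case True
      then obtain L where L: "\<forall>x y. length x = k t + mm t \<longrightarrow> length y = k t + mm t \<longrightarrow>
      ldist (phi t x) (phi t y) \<le> L * ldist x y" using phi_lip unfolding lipschitz_vec_def by blast
      show ?thesis
      proof (intro exI[of _ "max 0 L"] impI conjI allI)
        fix x y :: "real list" assume "length x = k t + mm t" "length y = k t + mm t"
        then have "ldist (phi t x) (phi t y) \<le> L * ldist x y" using L by blast
        also have "\<dots> \<le> max 0 L * ldist x y" by (rule mult_right_mono) (auto simp: ldist_nonneg)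
        finally show "ldist (phi t x) (phi t y) \<le> max 0 L * ldist x y" .
      qed auto
    qed auto
  qed
  then obtain Lphi where Lphi: "\<And>t. t < T \<Longrightarrow> Lphi t \<ge> 0 \<and> (\<forall>x y :: real list. length x = k t + mm t \<longrightarrow> length y = k t + mm t \<longrightarrow>
      ldist (phi t x) (phi t y) \<le> Lphi t * ldist x y)" by metis
  have "\<forall>t. \<exists>L. t < T \<longrightarrow> L \<ge> 0 \<and> (\<forall>A B. is_matrix (2 * k t + 1) n A \<longrightarrow> is_matrix (2 * k t + 1) n B \<longrightarrow>
      ldist (psi t A) (psi t B) \<le> L * mdist A B)"
  proof
    fix t
    show "\<exists>L. t < T \<longrightarrow> L \<ge> 0 \<and> (\<forall>A B. is_matrix (2 * k t + 1) n A \<longrightarrow> is_matrix (2 * k t + 1) n B \<longrightarrow>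
      ldist (psi t A) (psi t B) \<le> L * mdist A B)"
    proof (cases "t < T")
      case True
      then obtain L where L: "\<forall>A B. is_matrix (2 * k t + 1) n A \<longrightarrow> is_matrix (2 * k t + 1) n B \<longrightarrow>
      ldist (psi t A) (psi t B) \<le> L * mdist A B" using psi_lip unfolding lipschitz_mat_def by blast
      show ?thesis
      proof (intro exI[of _ "max 0 L"] impI conjI allI)
        fix A B assume "is_matrix (2 * k t + 1) n A" "is_matrix (2 * k t + 1) n B"
        then have "ldist (psi t A) (psi t B) \<le> L * mdist A B" using L by blast
        also have "\<dots> \<le> max 0 L * mdist A B" by (rule mult_right_mono) (auto simp: mdist_def intro!: sum_list_nonneg)
        finally show "ldist (psi t A) (psi t B) \<le> max 0 L * mdist A B" .
      qed auto
    qed auto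
  qed
  then obtain Lpsi where Lpsi: "\<And>t. t < T \<Longrightarrow> Lpsi t \<ge> 0 \<and> (\<forall>A B. is_matrix (2 * k t + 1) n A \<longrightarrow> is_matrix (2 * k t + 1) n B \<longrightarrow>
      ldist (psi t A) (psi t B) \<le> Lpsi t * mdist A B)" by metis
  obtain L0 where L0: "\<forall>A B. is_matrix (k T) n A \<longrightarrow> is_matrix (k T) n B \<longrightarrow>
      ldist (readout A) (readout B) \<le> L0 * mdist A B" using ro_lip unfolding lipschitz_mat_def by blast
  define Lro where "Lro = max 0 L0"
  have Lro0: "Lro \<ge> 0" by (simp add: Lro_def)
  have Lro: "ldist (readout A) (readout B) \<le> Lro * mdist A B"
    if "is_matrix (k T) n A" "is_matrix (k T) n B" for A B
  proof -
    have "ldist (readout A) (readout B) \<le> L0 * mdist A B" using L0 that by blast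
    also have "\<dots> \<le> Lro * mdist A B" unfolding Lro_def by (rule mult_right_mono) (auto simp: mdist_def intro!: sum_list_nonneg)
    finally show ?thesis .
  qed
  define M where "M = rec_nat (0::real) (\<lambda>t m. Lphi t * (m + Lpsi t * (2 * real n * m + 1)))"
  have M0: "M 0 = 0" and MS: "\<And>t. M (Suc t) = Lphi t * (M t + Lpsi t * (2 * real n * M t + 1))"
    by (simp_all add: M_def)
  define D where "D = (\<lambda>(X::nat \<Rightarrow> real^'d) (Y::nat \<Rightarrow> real^'d). \<Sum>i<n. \<Sum>j<n. \<bar>dist (X i) (X j) - dist (Y i) (Y j)\<bar>)"
  have D0: "D X Y \<ge> 0" for X Y unfolding D_def by (auto intro!: sum_nonneg)
  have Drow: "(\<Sum>j<n. \<bar>dist (X i) (X j) - dist (Y i) (Y j)\<bar>) \<le> D X Y" if "i < n" for X Y i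
    unfolding D_def using that
    by (intro member_le_sum) (auto intro!: sum_nonneg)
  have col: "t \<le> T \<Longrightarrow> \<forall>i<n. ldist (?c X t i) (?c Y t i) \<le> M t * D X Y" for X Y t
  proof (induction t)
    case 0 then show ?case by (simp add: M0 ldist_self)
  next
    case (Suc t)
    have t: "t < T" using Suc by simp
    have IH: "\<And>i. i < n \<Longrightarrow> ldist (?c X t i) (?c Y t i) \<le> M t * D X Y" using Suc by simp
    have lenX: "\<And>i. length (?c X t i) = k t" and lenY: "\<And>i. length (?c Y t i) = k t"
      using len[OF less_imp_le[OF t]] by auto
    show ?case
    proof (intro allI impI)
      fix i assume i: "i < n"
      define MX where "MX = map (\<lambda>j. ?c X t i @ ?c X t j @ [dist (X i) (X j)]) [0..<n]"
      define MY where "MY = map (\<lambda>j. ?c Y t i @ ?c Y t j @ [dist (Y i) (Y j)]) [0..<n]"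
      have mX: "is_matrix (2 * k t + 1) n MX" unfolding is_matrix_def MX_def using lenX by auto
      have mY: "is_matrix (2 * k t + 1) n MY" unfolding is_matrix_def MY_def using lenY by auto
      have lpX: "length (psi t MX) = mm t" using psi_ms[OF t] mX unfolding multiset_fun_def by blast
      have lpY: "length (psi t MY) = mm t" using psi_ms[OF t] mY unfolding multiset_fun_def by blast
      have rows: "ldist (?c X t i @ ?c X t j @ [dist (X i) (X j)]) (?c Y t i @ ?c Y t j @ [dist (Y i) (Y j)])
          \<le> 2 * (M t * D X Y) + \<bar>dist (X i) (X j) - dist (Y i) (Y j)\<bar>" if j: "j < n" for j
      proof -
        have "ldist (?c X t i @ ?c X t j @ [dist (X i) (X j)]) (?c Y t i @ ?c Y t j @ [dist (Y i) (Y j)])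
          \<le> ldist (?c X t i) (?c Y t i) + ldist (?c X t j @ [dist (X i) (X j)]) (?c Y t j @ [dist (Y i) (Y j)])"
          by (rule ldist_append) (simp add: lenX lenY)
        also have "ldist (?c X t j @ [dist (X i) (X j)]) (?c Y t j @ [dist (Y i) (Y j)])
           \<le> ldist (?c X t j) (?c Y t j) + ldist [dist (X i) (X j)] [dist (Y i) (Y j)]"
          by (rule ldist_append) (simp add: lenX lenY)
        finally show ?thesis using IH[OF i] IH[OF j] by (simp add: ldist_single)
      qed
      have "mdist MX MY \<le> (\<Sum>j<n. ldist (?c X t i @ ?c X t j @ [dist (X i) (X j)]) (?c Y t i @ ?c Y t j @ [dist (Y i) (Y j)]))"
        unfolding MX_def MY_def by (rule mdist_le)
      also have "\<dots> \<le> (\<Sum>j<n. 2 * (M t * D X Y) + \<bar>dist (X i) (X j) - dist (Y i) (Y j)\<bar>)"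
        by (rule sum_mono) (use rows in auto)
      also have "\<dots> = 2 * real n * (M t * D X Y) + (\<Sum>j<n. \<bar>dist (X i) (X j) - dist (Y i) (Y j)\<bar>)"
        by (simp add: sum.distrib)
      also have "\<dots> \<le> 2 * real n * (M t * D X Y) + D X Y" using Drow[OF i] by simp
      finally have md: "mdist MX MY \<le> (2 * real n * M t + 1) * D X Y" by (simp add: algebra_simps)
      have "ldist (?c X (Suc t) i) (?c Y (Suc t) i) = ldist (phi t (?c X t i @ psi t MX)) (phi t (?c Y t i @ psi t MY))"
        by (simp add: MX_def MY_def)
      also have "\<dots> \<le> Lphi t * ldist (?c X t i @ psi t MX) (?c Y t i @ psi t MY)"
        using Lphi[OF t] lenX lenY lpX lpY by simp
      also have "\<dots> \<le> Lphi t * (M t * D X Y + Lpsi t * ((2 * real n * M t + 1) * D X Y))"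
      proof (rule mult_left_mono)
        have "ldist (?c X t i @ psi t MX) (?c Y t i @ psi t MY) \<le> ldist (?c X t i) (?c Y t i) + ldist (psi t MX) (psi t MY)"
          by (rule ldist_append) (simp add: lenX lenY)
        also have "ldist (psi t MX) (psi t MY) \<le> Lpsi t * mdist MX MY" using Lpsi[OF t] mX mY by blast
        also have "\<dots> \<le> Lpsi t * ((2 * real n * M t + 1) * D X Y)"
          using md Lpsi[OF t] by (intro mult_left_mono) auto
        finally show "ldist (?c X t i @ psi t MX) (?c Y t i @ psi t MY) \<le> M t * D X Y + Lpsi t * ((2 * real n * M t + 1) * D X Y)"
          using IH[OF i] by linarith
      qed (use Lphi[OF t] in auto)
      also have "\<dots> = M (Suc t) * D X Y" by (simp add: MS algebra_simps)
      finally show "ldist (?c X (Suc t) i) (?c Y (Suc t) i) \<le> M (Suc t) * D X Y" .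
    qed
  qed
  define L where "L = max 1 (Lro * real n * M T)"
  have bound: "ldist (wl_model k psi phi readout T n X) (wl_model k psi phi readout T n Y) \<le> L * D X Y" for X Y
  proof -
    have mX: "is_matrix (k T) n (map (\<lambda>i. ?c X T i) [0..<n])" unfolding is_matrix_def using len by auto
    have mY: "is_matrix (k T) n (map (\<lambda>i. ?c Y T i) [0..<n])" unfolding is_matrix_def using len by auto
    have "ldist (wl_model k psi phi readout T n X) (wl_model k psi phi readout T n Y)
       \<le> Lro * mdist (map (\<lambda>i. ?c X T i) [0..<n]) (map (\<lambda>i. ?c Y T i) [0..<n])"
      unfolding wl_model_def using Lro[OF mX mY] .
    also have "\<dots> \<le> Lro * (\<Sum>i<n. ldist (?c X T i) (?c Y T i))"
      by (intro mult_left_mono mdist_le Lro0)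
    also have "\<dots> \<le> Lro * (\<Sum>i<n. M T * D X Y)"
      using col[of T X Y] by (intro mult_left_mono sum_mono Lro0) auto
    also have "\<dots> = (Lro * real n * M T) * D X Y" by simp
    also have "\<dots> \<le> L * D X Y" unfolding L_def by (intro mult_right_mono D0) simp
    finally show ?thesis .
  qed
  have inv: "wl_model k psi phi readout T n (Y \<circ> \<pi>) = wl_model k psi phi readout T n Y"
    if p: "\<pi> permutes {..<n}" for Y :: "nat \<Rightarrow> real^'d" and \<pi>
  proof -
    have pi_lt: "\<And>i. i < n \<Longrightarrow> \<pi> i < n" using p by (metis lessThan_iff permutes_in_image)
    have ceq: "t \<le> T \<Longrightarrow> \<forall>i<n. ?c (Y \<circ> \<pi>) t i = ?c Y t (\<pi> i)" for t
    proof (induction t)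
      case 0 then show ?case by simp
    next
      case (Suc t)
      have t: "t < T" using Suc by simp
      have IH: "\<And>i. i < n \<Longrightarrow> ?c (Y \<circ> \<pi>) t i = ?c Y t (\<pi> i)" using Suc by (simp add: comp_def)
      show ?case
      proof (intro allI impI)
        fix i assume i: "i < n"
        define h where "h = (\<lambda>j. ?c Y t (\<pi> i) @ ?c Y t j @ [dist (Y (\<pi> i)) (Y j)])"
        have e1: "map (\<lambda>j. ?c (Y \<circ> \<pi>) t i @ ?c (Y \<circ> \<pi>) t j @ [dist ((Y \<circ> \<pi>) i) ((Y \<circ> \<pi>) j)]) [0..<n]
            = map (h \<circ> \<pi>) [0..<n]"
          using IH i by (auto simp: h_def)
        have mA: "is_matrix (2 * k t + 1) n (map (h \<circ> \<pi>) [0..<n])"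
          unfolding is_matrix_def h_def using len[OF less_imp_le[OF t]] by auto
        have mB: "is_matrix (2 * k t + 1) n (map h [0..<n])"
          unfolding is_matrix_def h_def using len[OF less_imp_le[OF t]] by auto
        have "psi t (map (h \<circ> \<pi>) [0..<n]) = psi t (map h [0..<n])"
          using psi_ms[OF t] mA mB mset_perm[OF p] unfolding multiset_fun_def by blast
        note pe = this
        have "?c (Y \<circ> \<pi>) (Suc t) i = phi t (?c (Y \<circ> \<pi>) t i @ psi t (map (\<lambda>j. ?c (Y \<circ> \<pi>) t i @ ?c (Y \<circ> \<pi>) t j @ [dist ((Y \<circ> \<pi>) i) ((Y \<circ> \<pi>) j)]) [0..<n]))"
          by (rule wl_color.simps(2))
        also have "\<dots> = phi t (?c Y t (\<pi> i) @ psi t (map (h \<circ> \<pi>) [0..<n]))"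
          by (subst e1) (simp only: IH[OF i])
        also have "\<dots> = phi t (?c Y t (\<pi> i) @ psi t (map h [0..<n]))" by (simp only: pe)
        also have "\<dots> = ?c Y (Suc t) (\<pi> i)" by (simp add: h_def)
        finally show "?c (Y \<circ> \<pi>) (Suc t) i = ?c Y (Suc t) (\<pi> i)" .
      qed
    qed
    have e: "map (\<lambda>i. ?c (Y \<circ> \<pi>) T i) [0..<n] = map ((\<lambda>i. ?c Y T i) \<circ> \<pi>) [0..<n]"
      using ceq[of T] by auto
    have mA: "is_matrix (k T) n (map ((\<lambda>i. ?c Y T i) \<circ> \<pi>) [0..<n])" unfolding is_matrix_def using len by auto
    have mB: "is_matrix (k T) n (map (\<lambda>i. ?c Y T i) [0..<n])" unfolding is_matrix_def using len by auto
    show ?thesis unfolding wl_model_def e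
      using ro_ms mA mB mset_perm[OF p] unfolding multiset_fun_def by blast
  qed
  show ?thesis
  proof (intro exI[of _ L] conjI allI)
    show "L > 0" unfolding L_def by simp
    fix X Y :: "nat \<Rightarrow> real^'d"
    define f where "f = (\<lambda>\<pi>. \<Sum>i<n. \<Sum>j<n. \<bar>dist (X i) (X j) - dist (Y (\<pi> i)) (Y (\<pi> j))\<bar>)"
    have S: "{(\<Sum>i<n. \<Sum>j<n. \<bar>dist (X i) (X j) - dist (Y (\<pi> i)) (Y (\<pi> j))\<bar>) | \<pi>. \<pi> permutes {..<n}}
        = f ` {\<pi>. \<pi> permutes {..<n}}" unfolding f_def by blast
    have fin: "finite (f ` {\<pi>. \<pi> permutes {..<n}})" by (simp add: finite_permutations)
    have ne: "f ` {\<pi>. \<pi> permutes {..<n}} \<noteq> {}" using permutes_id by blast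
    have "hard_GW n X Y \<in> f ` {\<pi>. \<pi> permutes {..<n}}" unfolding hard_GW_def S
      using Min_in[OF fin ne] .
    then obtain \<pi> where p: "\<pi> permutes {..<n}" and hg: "hard_GW n X Y = f \<pi>" by blast
    have "ldist (wl_model k psi phi readout T n X) (wl_model k psi phi readout T n Y)
       = ldist (wl_model k psi phi readout T n X) (wl_model k psi phi readout T n (Y \<circ> \<pi>))"
      using inv[OF p] by simp
    also have "\<dots> \<le> L * D X (Y \<circ> \<pi>)" by (rule bound)
    also have "D X (Y \<circ> \<pi>) = hard_GW n X Y" unfolding hg f_def D_def by simp
    finally show "ldist (wl_model k psi phi readout T n X) (wl_model k psi phi readout T n Y) \<le> L * hard_GW n X Y" .
  qed
qed

end
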